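(* Let $N_f\ge1$ be an integer, $\beta>0$, $\lambda>0$, and let $p_r(i)=i^{-\beta}/\sum_{k=1}^{N_f}k^{-\beta}$. For $r_c>0$ let $p_c^*(i)=p_c^*(i;r_c)$, $i=1,\dots,N_f$, be an optimal solution of $\max \sum_{i=1}^{N_f}p_r(i)(1-e^{-\lambda p_c(i)\pi r_c^2})$ subject to $\sum_i p_c(i)=1$, $p_c(i)\ge0$, and define the maximal offloading ratio \[ p_o(p_c^*,r_c)=\sum_{i=1}^{N_f}p_r(i)\left(1-e^{-\lambda p_c^*(i)\pi r_c^2}\right). \] Let $F,W,\sigma_0^2,\eta,P_c,P_{\max},\alpha>0$, and for $r>0$ let $E_c^*(r)$ be the minimum value of \[ \frac{F}{W\log_2\!\left(1+\frac{P_t r^{-\alpha}}{\sigma_0^2}\right)}\left(\frac{1}{\eta}P_t+P_c\right)\quad\text{over } 0<P_t\le P_{\max}. \] With $f(p,r)=2\pi r\lambda p\,e^{-\lambda p\pi r^2}$, define the minimal average energy cost \[ \bar E_c^*(r_c)=\sum_{i=1}^{N_f}p_r(i)\int_0^{r_c}E_c^*(r)\,f(p_c^*(i;r_c),r)\,dr. \] Then both $p_o(p_c^*,r_c)$ and $\bar E_c^*(r_c)$ are increasing functions of the collaboration distance $r_c$.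
   Context: Interpretation: users form a Poisson point process of density $\lambda$, file requests follow a Zipf distribution over $N_f$ files, users cache files with the optimized probabilities $p_c^*(i)$, a user is served via a D2D link only by a caching user within distance $r_c$ (the collaboration distance), $f(p_c^*(i),r)$ is the density of the distance to the nearest user caching file $i$, and $E_c^*(r)$ is the minimal energy for a transmitter to send a file over a link of length $r$. *)

theory Defs
  imports "HOL-Analysis.Analysis"
begin

definition zipf :: "nat \<Rightarrow> real \<Rightarrow> nat \<Rightarrow> real" where
  "zipf Nf \<beta> i = real i powr (-\<beta>) / (\<Sum>k=1..Nf. real k powr (-\<beta>))"

definition offload :: "nat \<Rightarrow> real \<Rightarrow> real \<Rightarrow> (nat \<Rightarrow> real) \<Rightarrow> real \<Rightarrow> real" where
  "offload Nf \<beta> lam pc rc =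
     (\<Sum>i=1..Nf. zipf Nf \<beta> i * (1 - exp (- lam * pc i * pi * rc^2)))"

definition feasible_cache :: "nat \<Rightarrow> (nat \<Rightarrow> real) \<Rightarrow> bool" where
  "feasible_cache Nf pc \<longleftrightarrow> (\<forall>i\<in>{1..Nf}. pc i \<ge> 0) \<and> (\<Sum>i=1..Nf. pc i) = 1"

definition opt_cache :: "nat \<Rightarrow> real \<Rightarrow> real \<Rightarrow> real \<Rightarrow> (nat \<Rightarrow> real) \<Rightarrow> bool" where
  "opt_cache Nf \<beta> lam rc pc \<longleftrightarrow> feasible_cache Nf pc \<and>
     (\<forall>q. feasible_cache Nf q \<longrightarrow> offload Nf \<beta> lam q rc \<le> offload Nf \<beta> lam pc rc)"

definition energy :: "real \<Rightarrow> real \<Rightarrow> real \<Rightarrow> real \<Rightarrow> real \<Rightarrow> real \<Rightarrow> real \<Rightarrow> real \<Rightarrow> real" where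
  "energy F W sigma2 \<eta> Pc \<alpha> r Pt =
     F / (W * log 2 (1 + Pt * r powr (-\<alpha>) / sigma2)) * (Pt / \<eta> + Pc)"

definition min_energy :: "real \<Rightarrow> real \<Rightarrow> real \<Rightarrow> real \<Rightarrow> real \<Rightarrow> real \<Rightarrow> real \<Rightarrow> real \<Rightarrow> real" where
  "min_energy F W sigma2 \<eta> Pc Pmax \<alpha> r =
     Inf ((\<lambda>Pt. energy F W sigma2 \<eta> Pc \<alpha> r Pt) ` {0<..Pmax})"

text \<open>Density of the distance to the nearest user caching a file cached with probability p.\<close>
definition dist_density :: "real \<Rightarrow> real \<Rightarrow> real \<Rightarrow> real" where
  "dist_density lam p r = 2 * pi * r * lam * p * exp (- lam * p * pi * r^2)"

definition avg_energy ::
  "nat \<Rightarrow> real \<Rightarrow> real \<Rightarrow> real \<Rightarrow> real \<Rightarrow> real \<Rightarrow> real \<Rightarrow> real \<Rightarrow> real \<Rightarrow> real \<Rightarrow>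
   (nat \<Rightarrow> real) \<Rightarrow> real \<Rightarrow> real" where
  "avg_energy Nf \<beta> lam F W sigma2 \<eta> Pc Pmax \<alpha> pc rc =
     (\<Sum>i=1..Nf. zipf Nf \<beta> i *
        integral {0..rc} (\<lambda>r. min_energy F W sigma2 \<eta> Pc Pmax \<alpha> r * dist_density lam (pc i) r))"

end

theory Submission
  imports Defs
begin


lemma cheb:
  fixes u w :: "nat \<Rightarrow> real" and A :: "nat set" and c :: real
  assumes "finite A" and "\<And>i. i \<in> A \<Longrightarrow> (w i - c) * (real (card A) * u i - (\<Sum>j\<in>A. u j)) \<ge> 0"
  shows "(\<Sum>i\<in>A. w i * (real (card A) * u i - (\<Sum>j\<in>A. u j))) \<ge> 0"
proof -
  let ?k = "real (card A)" and ?D = "\<Sum>j\<in>A. u j"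
  have z: "(\<Sum>i\<in>A. c * (?k * u i - ?D)) = 0"
    by (simp add: sum_distrib_left[symmetric] sum_subtractf sum_distrib_left[of ?k, symmetric])
  have "(\<Sum>i\<in>A. w i * (?k * u i - ?D)) = (\<Sum>i\<in>A. (w i - c) * (?k * u i - ?D)) + (\<Sum>i\<in>A. c * (?k * u i - ?D))"
    by (simp add: sum.distrib[symmetric] algebra_simps)
  also have "\<dots> \<ge> 0" using z assms by (simp add: sum_nonneg)
  finally show ?thesis .
qed

definition uu :: "(nat \<Rightarrow> real) \<Rightarrow> real \<Rightarrow> nat \<Rightarrow> real" where
  "uu pr L i = max 0 (ln (pr i) - L)"
definition SS :: "nat set \<Rightarrow> (nat \<Rightarrow> real) \<Rightarrow> real \<Rightarrow> real" where
  "SS I pr L = (\<Sum>i\<in>I. uu pr L i)"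
definition TT :: "nat set \<Rightarrow> (nat \<Rightarrow> real) \<Rightarrow> real \<Rightarrow> real \<Rightarrow> real" where
  "TT I pr t L = (\<Sum>i\<in>I. pr i * exp (-(t * uu pr L i / SS I pr L))) - (\<Sum>i\<in>I. pr i * exp (- uu pr L i))"
definition AA :: "nat set \<Rightarrow> (nat \<Rightarrow> real) \<Rightarrow> real \<Rightarrow> nat set" where
  "AA I pr L = {i\<in>I. ln (pr i) > L}"
definition TD :: "nat set \<Rightarrow> (nat \<Rightarrow> real) \<Rightarrow> real \<Rightarrow> real \<Rightarrow> real" where
  "TD I pr t L = (\<Sum>i\<in>AA I pr L. (-(pr i * exp(-(t*(ln(pr i) - L)/SS I pr L)) *
      (t * (real (card (AA I pr L)) * (ln (pr i) - L) - SS I pr L) / (SS I pr L)^2)) - pr i * exp(-(ln(pr i) - L))))"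

lemma SS_eq: "finite I \<Longrightarrow> SS I pr L = (\<Sum>i\<in>AA I pr L. (ln (pr i) - L))"
  unfolding SS_def AA_def uu_def
  by (rule sum.mono_neutral_cong_right) auto

lemma SS_anti: "finite I \<Longrightarrow> L2 \<le> L1 \<Longrightarrow> SS I pr L1 \<le> SS I pr L2"
  unfolding SS_def uu_def by (rule sum_mono) auto

lemma TD_nonpos:
  assumes fin: "finite I" and pos: "\<And>i. i \<in> I \<Longrightarrow> pr i > 0"
    and D: "SS I pr L > 0" and t: "0 \<le> t" "t \<le> SS I pr L"
  shows "TD I pr t L \<le> 0"
proof -
  let ?A = "AA I pr L" let ?D = "SS I pr L" let ?k = "real (card ?A)"
  define u where "u i = ln (pr i) - L" for i
  have finA: "finite ?A" using fin unfolding AA_def by auto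
  have Dsum: "?D = (\<Sum>j\<in>?A. u j)" using SS_eq[OF fin] u_def by simp
  have Ane: "?A \<noteq> {}" using D Dsum by auto
  hence kpos: "?k > 0" using finA by (simp add: card_gt_0_iff)
  define \<theta> where "\<theta> = t / ?D"
  have th: "0 \<le> \<theta>" "\<theta> \<le> 1" using t D by (auto simp: \<theta>_def)
  define c where "c = exp (L + (1 - \<theta>) * (?D / ?k))"
  have w: "pr i * exp(-(t*(ln(pr i) - L)/?D)) = exp (L + (1 - \<theta>) * u i)" if "i \<in> ?A" for i
  proof -
    have "pr i * exp(-(t*(ln(pr i) - L)/?D)) = exp (ln (pr i)) * exp(-(\<theta> * u i))"
      using pos that by (simp add: AA_def u_def \<theta>_def)
    also have "\<dots> = exp (L + (1 - \<theta>) * u i)" by (simp add: u_def algebra_simps flip: exp_add)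
    finally show ?thesis .
  qed
  have S1: "(\<Sum>i\<in>?A. (pr i * exp(-(t*(ln(pr i) - L)/?D))) * (?k * u i - (\<Sum>j\<in>?A. u j))) \<ge> 0"
  proof (rule cheb[OF finA, where c = c])
    fix i assume i: "i \<in> ?A"
    show "(pr i * exp(-(t*(ln(pr i) - L)/?D)) - c) * (?k * u i - (\<Sum>j\<in>?A. u j)) \<ge> 0"
    proof (cases "u i \<ge> ?D / ?k")
      case True
      hence "?k * u i - ?D \<ge> 0" using kpos by (simp add: field_simps)
      moreover have "exp (L + (1 - \<theta>) * u i) \<ge> c" unfolding c_def
        using mult_left_mono[OF True, of "1 - \<theta>"] th by simp
      ultimately show ?thesis using w[OF i] Dsum by simp
    next
      case False
      hence "?k * u i - ?D \<le> 0" using kpos by (simp add: field_simps)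
      moreover have "exp (L + (1 - \<theta>) * u i) \<le> c" unfolding c_def
        using mult_left_mono[of "u i" "?D / ?k" "1 - \<theta>"] False th by simp
      ultimately show ?thesis using w[OF i] Dsum by (simp add: mult_nonpos_nonpos)
    qed
  qed
  have "TD I pr t L = (\<Sum>i\<in>?A. (- (t / ?D^2)) * ((pr i * exp(-(t*(ln(pr i) - L)/?D))) * (?k * u i - ?D))
       - pr i * exp(-(ln(pr i) - L)))"
    unfolding TD_def u_def by (rule sum.cong) (simp_all add: field_simps)
  also have "\<dots> = - (t / ?D^2) * (\<Sum>i\<in>?A. (pr i * exp(-(t*(ln(pr i) - L)/?D))) * (?k * u i - (\<Sum>j\<in>?A. u j)))
       - (\<Sum>i\<in>?A. pr i * exp(-(ln(pr i) - L)))"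
    by (simp add: sum_subtractf sum_distrib_left Dsum[symmetric])
  also have "\<dots> \<le> 0"
  proof -
    have "(t / ?D^2) * (\<Sum>i\<in>?A. (pr i * exp(-(t*(ln(pr i) - L)/?D))) * (?k * u i - (\<Sum>j\<in>?A. u j))) \<ge> 0"
      using S1 t by simp
    moreover have "(\<Sum>i\<in>?A. pr i * exp(-(ln(pr i) - L))) \<ge> 0"
      using pos by (intro sum_nonneg) (auto simp: AA_def less_imp_le)
    ultimately show ?thesis by linarith
  qed
  finally show ?thesis .
qed

lemma TT_deriv:
  assumes fin: "finite I" and notin: "L0 \<notin> (\<lambda>i. ln (pr i)) ` I" and D: "SS I pr L0 > 0"
  shows "(TT I pr t has_field_derivative TD I pr t L0) (at L0)"
proof -
  let ?A = "AA I pr L0"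
  define C where "C = (\<Sum>i\<in>?A. ln (pr i))"
  define k where "k = real (card ?A)"
  have finA: "finite ?A" using fin unfolding AA_def by auto
  define g where "g l = (\<Sum>i\<in>?A. pr i * exp(-(t*(ln(pr i) - l)/(C - k*l))) - pr i * exp(-(ln(pr i) - l)))" for l
  define V where "V i = (if ln (pr i) > L0 then {..<ln (pr i)} else {ln (pr i)<..})" for i
  define U where "U = (\<Inter>i\<in>I. V i)"
  have "open U" unfolding U_def V_def using fin by (intro open_INT) auto
  have L0U: "L0 \<in> U" using notin unfolding U_def V_def by (auto simp: not_less order.order_iff_strict)
  have actU: "(ln (pr i) > l) = (ln (pr i) > L0)" if "l \<in> U" "i \<in> I" for l i
  proof -
    have "l \<in> V i" using that unfolding U_def by auto
    thus ?thesis unfolding V_def by (auto split: if_splits)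
  qed
  have SSC: "SS I pr l = C - k * l" if "l \<in> U" for l
  proof -
    have "AA I pr l = ?A" using actU[OF that] unfolding AA_def by auto
    thus ?thesis using SS_eq[OF fin, of pr l] finA
      by (simp add: C_def k_def sum_subtractf)
  qed
  have Dpos: "C - k * L0 > 0" using SSC[OF L0U] D by simp
  have eq: "TT I pr t l = g l" if "l \<in> U" for l
  proof -
    have act: "\<And>i. i \<in> I \<Longrightarrow> (ln (pr i) > l) = (ln (pr i) > L0)" using actU[OF that] by blast
    have "TT I pr t l = (\<Sum>i\<in>I. pr i * exp (-(t * uu pr l i / SS I pr l)) - pr i * exp (- uu pr l i))"
      unfolding TT_def by (simp add: sum_subtractf)
    also have "\<dots> = (\<Sum>i\<in>?A. pr i * exp (-(t * uu pr l i / SS I pr l)) - pr i * exp (- uu pr l i))"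
    proof (rule sum.mono_neutral_right)
      show "\<forall>i\<in>I - ?A. pr i * exp (-(t * uu pr l i / SS I pr l)) - pr i * exp (- uu pr l i) = 0"
      proof
        fix i assume i: "i \<in> I - ?A"
        hence "\<not> l < ln (pr i)" using act by (auto simp: AA_def)
        hence "uu pr l i = 0" by (simp add: uu_def)
        thus "pr i * exp (-(t * uu pr l i / SS I pr l)) - pr i * exp (- uu pr l i) = 0" by simp
      qed
    qed (use fin in \<open>auto simp: AA_def\<close>)
    also have "\<dots> = g l" unfolding g_def SSC[OF that]
      using act by (intro sum.cong) (auto simp: AA_def uu_def)
    finally show ?thesis .
  qed
  have dg: "(g has_field_derivative (\<Sum>i\<in>?A. -(pr i * exp(-(t*(ln(pr i) - L0)/(C - k*L0))) *
      (t * (k * (ln (pr i) - L0) - (C - k*L0)) / (C - k*L0)^2)) - pr i * exp(-(ln(pr i) - L0)))) (at L0)"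
    unfolding g_def
  proof (rule DERIV_sum)
    fix i assume "i \<in> ?A"
    show "((\<lambda>l. pr i * exp(-(t*(ln(pr i) - l)/(C - k*l))) - pr i * exp(-(ln(pr i) - l))) has_field_derivative
      -(pr i * exp(-(t*(ln(pr i) - L0)/(C - k*L0))) *
      (t * (k * (ln (pr i) - L0) - (C - k*L0)) / (C - k*L0)^2)) - pr i * exp(-(ln(pr i) - L0))) (at L0)"
      using Dpos
      by (auto intro!: derivative_eq_intros simp: field_simps power2_eq_square)
  qed
  have "TD I pr t L0 = (\<Sum>i\<in>?A. -(pr i * exp(-(t*(ln(pr i) - L0)/(C - k*L0))) *
      (t * (k * (ln (pr i) - L0) - (C - k*L0)) / (C - k*L0)^2)) - pr i * exp(-(ln(pr i) - L0)))"
    unfolding TD_def SSC[OF L0U] k_def ..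
  with dg have "(g has_field_derivative TD I pr t L0) (at L0)" by simp
  thus ?thesis
    by (rule has_field_derivative_transform_within_open[OF _ \<open>open U\<close> L0U]) (simp add: eq)
qed

lemma cont_maxd: "continuous_on X (\<lambda>x::real. max 0 (c - x))"
  by (intro continuous_on_max continuous_intros)

lemma TT_cont:
  assumes "\<And>x. x \<in> X \<Longrightarrow> SS I pr x \<noteq> 0"
  shows "continuous_on X (TT I pr t)"
proof -
  have "continuous_on X (\<lambda>L. SS I pr L)" unfolding SS_def uu_def by (intro continuous_intros cont_maxd)
  then show ?thesis unfolding TT_def using assms
    by (intro continuous_intros) (auto simp: uu_def cont_maxd)
qed

lemma TT_mono:
  assumes fin: "finite I" and pos: "\<And>i. i \<in> I \<Longrightarrow> pr i > 0" and L: "L2 \<le> L1"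
    and D: "SS I pr L1 > 0" and t: "0 \<le> t" "t \<le> SS I pr L1"
  shows "TT I pr t L1 \<le> TT I pr t L2"
proof -
  have SSge: "SS I pr x \<ge> SS I pr L1" if "x \<in> {L2..L1}" for x
    using SS_anti[OF fin, of x L1 pr] that by auto
  have "(TD I pr t has_integral (TT I pr t L1 - TT I pr t L2)) {L2..L1}"
  proof (rule fundamental_theorem_of_calculus_interior_strong[where S = "(\<lambda>i. ln (pr i)) ` I"])
    show "finite ((\<lambda>i. ln (pr i)) ` I)" using fin by simp
    show "L2 \<le> L1" by fact
    show "continuous_on {L2..L1} (TT I pr t)" using SSge D by (intro TT_cont) force
    fix x assume x: "x \<in> {L2<..<L1} - (\<lambda>i. ln (pr i)) ` I"
    have "SS I pr x > 0" using SSge[of x] x D by auto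
    then show "(TT I pr t has_vector_derivative TD I pr t x) (at x)"
      using TT_deriv[OF fin, of x pr t] x by (simp add: has_real_derivative_iff_has_vector_derivative)
  qed
  moreover have "((\<lambda>_. 0::real) has_integral 0) {L2..L1}" by simp
  ultimately have "TT I pr t L1 - TT I pr t L2 \<le> 0"
  proof (rule has_integral_le)
    fix x assume x: "x \<in> {L2..L1}"
    show "TD I pr t x \<le> 0" using SSge[OF x] D t by (intro TD_nonpos[OF fin pos]) auto
  qed
  thus ?thesis by simp
qed

lemma zipf_pos: assumes "i \<in> {1..Nf}" shows "zipf Nf \<beta> i > 0"
proof -
  have "(\<Sum>k=1..Nf. real k powr (-\<beta>)) > 0"
    using assms by (intro sum_pos) auto
  thus ?thesis using assms unfolding zipf_def by (auto intro!: divide_pos_pos)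
qed

lemma offload_alt: "offload Nf \<beta> lam pc rc =
   (\<Sum>i=1..Nf. zipf Nf \<beta> i * (1 - exp (- (pc i * (lam * pi * rc^2)))))"
  unfolding offload_def by (simp add: algebra_simps)

lemma kkt_step:
  assumes lam: "lam > 0" and rc: "rc > 0" and opt: "opt_cache Nf \<beta> lam rc p"
    and i: "i \<in> {1..Nf}" and j: "j \<in> {1..Nf}" and pi0: "p i > 0"
  shows "zipf Nf \<beta> j * exp (-(p j * (lam * pi * rc^2))) \<le> zipf Nf \<beta> i * exp (-(p i * (lam * pi * rc^2)))"
proof (rule ccontr)
  define x where "x = lam * pi * rc^2"
  have x: "x > 0" using lam rc by (simp add: x_def)
  let ?pr = "zipf Nf \<beta>"
  define mi where "mi = ?pr i * exp (-(p i * x))"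
  define mj where "mj = ?pr j * exp (-(p j * x))"
  assume "\<not> ?thesis"
  hence mji: "mj > mi" by (simp add: mi_def mj_def x_def)
  have mi0: "mi > 0" using zipf_pos[OF i] by (simp add: mi_def)
  hence ratio: "mj / mi > 1" using mji by simp
  hence lnpos: "ln (mj / mi) > 0" by simp
  have ij: "i \<noteq> j" using mji by (auto simp: mi_def mj_def)
  define \<epsilon> where "\<epsilon> = min (p i) (ln (mj / mi) / (2 * x))"
  have eps: "\<epsilon> > 0" "\<epsilon> \<le> p i" using pi0 lnpos x by (auto simp: \<epsilon>_def)
  have "\<epsilon> * x \<le> ln (mj / mi) / 2" using x by (simp add: \<epsilon>_def min_def field_simps split: if_splits)
  hence "\<epsilon> * x < ln (mj / mi)" using lnpos by linarith
  hence z: "exp (\<epsilon> * x) < mj / mi" using ratio by (metis exp_less_mono exp_ln less_trans zero_less_one)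
  define q where "q k = p k + (if k = j then \<epsilon> else 0) - (if k = i then \<epsilon> else 0)" for k
  have feas: "feasible_cache Nf p" using opt by (simp add: opt_cache_def)
  have fq: "feasible_cache Nf q"
    unfolding feasible_cache_def
  proof
    show "\<forall>k\<in>{1..Nf}. 0 \<le> q k" using feas eps ij unfolding feasible_cache_def q_def by auto
    have "(\<Sum>k=1..Nf. q k) = (\<Sum>k=1..Nf. p k) + (\<Sum>k=1..Nf. (if k = j then \<epsilon> else 0)) - (\<Sum>k=1..Nf. (if k = i then \<epsilon> else 0))"
      unfolding q_def by (simp add: sum.distrib sum_subtractf)
    also have "\<dots> = 1" using feas i j by (simp add: feasible_cache_def)
    finally show "(\<Sum>k=1..Nf. q k) = 1" .
  qed
  define h where "h k = ?pr k * (exp (-(p k * x)) - exp (-(q k * x)))" for k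
  have "offload Nf \<beta> lam q rc - offload Nf \<beta> lam p rc = (\<Sum>k=1..Nf. h k)"
    unfolding offload_alt h_def x_def[symmetric] by (simp add: sum_subtractf[symmetric] algebra_simps)
  also have "\<dots> = (\<Sum>k\<in>{i,j}. h k)"
    using i j by (intro sum.mono_neutral_right) (auto simp: h_def q_def)
  also have "\<dots> = h i + h j" using ij by simp
  also have "h i = mi * (1 - exp (\<epsilon> * x))"
    using ij by (simp add: h_def q_def mi_def algebra_simps flip: exp_add)
  also have "h j = mj * (1 - exp (- (\<epsilon> * x)))"
    using ij by (simp add: h_def q_def mj_def algebra_simps flip: exp_add)
  finally have diff: "offload Nf \<beta> lam q rc - offload Nf \<beta> lam p rc = mi * (1 - exp (\<epsilon> * x)) + mj * (1 - exp (- (\<epsilon> * x)))" .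
  define zz where "zz = exp (\<epsilon> * x)"
  have zz1: "zz > 1" using eps x by (simp add: zz_def)
  have zzr: "zz * mi < mj" using z mi0 by (simp add: zz_def field_simps)
  have "mi * (1 - zz) + mj * (1 - 1 / zz) = (zz - 1) * (mj - zz * mi) / zz"
    using zz1 by (simp add: field_simps)
  also have "\<dots> > 0" using zz1 zzr by (intro divide_pos_pos mult_pos_pos) auto
  finally have P: "mi * (1 - zz) + mj * (1 - 1 / zz) > 0" .
  have "exp (- (\<epsilon> * x)) = 1 / zz" by (simp add: zz_def exp_minus field_simps)
  hence "offload Nf \<beta> lam q rc - offload Nf \<beta> lam p rc > 0" using diff P by (simp add: zz_def)
  hence "offload Nf \<beta> lam q rc > offload Nf \<beta> lam p rc" by simp
  moreover have "offload Nf \<beta> lam q rc \<le> offload Nf \<beta> lam p rc" using opt fq by (simp add: opt_cache_def)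
  ultimately show False by simp
qed

lemma kkt:
  assumes lam: "lam > 0" and rc: "rc > 0" and opt: "opt_cache Nf \<beta> lam rc p"
  shows "\<exists>L. (\<forall>i\<in>{1..Nf}. p i * (lam * pi * rc^2) = uu (zipf Nf \<beta>) L i)
             \<and> SS {1..Nf} (zipf Nf \<beta>) L = lam * pi * rc^2"
proof -
  define x where "x = lam * pi * rc^2"
  let ?pr = "zipf Nf \<beta>"
  define m where "m k = ?pr k * exp (-(p k * x))" for k
  have feas: "feasible_cache Nf p" using opt by (simp add: opt_cache_def)
  have ex: "\<exists>i0\<in>{1..Nf}. p i0 > 0"
  proof (rule ccontr)
    assume "\<not> ?thesis"
    hence "\<forall>i\<in>{1..Nf}. p i = 0" using feas unfolding feasible_cache_def
      by (metis antisym not_le)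
    hence "(\<Sum>i=1..Nf. p i) = 0" by simp
    thus False using feas by (simp add: feasible_cache_def)
  qed
  then obtain i0 where i0: "i0 \<in> {1..Nf}" "p i0 > 0" by blast
  define L where "L = ln (m i0)"
  have mpos: "m k > 0" if "k \<in> {1..Nf}" for k using zipf_pos[OF that] by (simp add: m_def)
  have lnm: "ln (m k) = ln (?pr k) - p k * x" if "k \<in> {1..Nf}" for k
  proof -
    have "?pr k > 0" using zipf_pos[OF that] .
    thus ?thesis unfolding m_def by (subst ln_mult) auto
  qed
  have step: "m j \<le> m i" if "i \<in> {1..Nf}" "j \<in> {1..Nf}" "p i > 0" for i j
    unfolding m_def x_def by (rule kkt_step[OF lam rc opt that])
  have main: "p i * x = uu ?pr L i" if i: "i \<in> {1..Nf}" for i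
  proof (cases "p i > 0")
    case True
    have "m i = m i0" using step[OF i i0(1) True] step[OF i0(1) i i0(2)] by simp
    hence "ln (m i) = L" unfolding L_def by simp
    hence e0: "ln (?pr i) - p i * x = L" using lnm[OF i] by linarith
    have e: "ln (?pr i) - L = p i * x" using e0 by linarith
    have "p i * x > 0" using True lam rc by (simp add: x_def)
    thus ?thesis unfolding uu_def e by simp
  next
    case False
    hence p0: "p i = 0" using feas i unfolding feasible_cache_def by (metis antisym not_le)
    have "m i \<le> m i0" using step[OF i0(1) i i0(2)] .
    hence "ln (m i) \<le> L" unfolding L_def using mpos[OF i] by (subst ln_le_cancel_iff) (auto simp: mpos[OF i0(1)])
    thus ?thesis using lnm[OF i] p0 by (simp add: uu_def)
  qed
  have "SS {1..Nf} ?pr L = (\<Sum>i=1..Nf. p i * x)" unfolding SS_def by (rule sum.cong) (auto simp: main)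
  also have "\<dots> = x" using feas by (simp add: feasible_cache_def sum_distrib_right[symmetric])
  finally have "SS {1..Nf} ?pr L = x" .
  with main show ?thesis unfolding x_def by blast
qed

lemma tail_eq:
  assumes lam: "lam > 0" and rc: "rc > 0"
    and K: "\<forall>i\<in>{1..Nf}. p i * (lam * pi * rc^2) = uu (zipf Nf \<beta>) L i"
    and S: "SS {1..Nf} (zipf Nf \<beta>) L = lam * pi * rc^2"
  shows "(\<Sum>i=1..Nf. zipf Nf \<beta> i * (exp (- lam * p i * pi * \<tau>^2) - exp (- lam * p i * pi * rc^2)))
       = TT {1..Nf} (zipf Nf \<beta>) (lam * pi * \<tau>^2) L"
proof -
  define x where "x = lam * pi * rc^2"
  have x: "x > 0" using lam rc by (simp add: x_def)
  have "(\<Sum>i=1..Nf. zipf Nf \<beta> i * (exp (- lam * p i * pi * \<tau>^2) - exp (- lam * p i * pi * rc^2)))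
      = (\<Sum>i=1..Nf. zipf Nf \<beta> i * exp (-(lam * pi * \<tau>^2 * uu (zipf Nf \<beta>) L i / SS {1..Nf} (zipf Nf \<beta>) L))
          - zipf Nf \<beta> i * exp (- uu (zipf Nf \<beta>) L i))"
  proof (rule sum.cong)
    fix i assume i: "i \<in> {1..Nf}"
    have u: "uu (zipf Nf \<beta>) L i = p i * x" using K i by (simp add: x_def)
    have e1: "- lam * p i * pi * \<tau>^2 = -(lam * pi * \<tau>^2 * uu (zipf Nf \<beta>) L i / SS {1..Nf} (zipf Nf \<beta>) L)"
      unfolding u S x_def[symmetric] using x by (simp add: field_simps)
    have e2: "- lam * p i * pi * rc^2 = - uu (zipf Nf \<beta>) L i"
      unfolding u x_def by (simp add: field_simps)
    show "zipf Nf \<beta> i * (exp (- lam * p i * pi * \<tau>^2) - exp (- lam * p i * pi * rc^2)) =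
      zipf Nf \<beta> i * exp (-(lam * pi * \<tau>^2 * uu (zipf Nf \<beta>) L i / SS {1..Nf} (zipf Nf \<beta>) L))
          - zipf Nf \<beta> i * exp (- uu (zipf Nf \<beta>) L i)"
      unfolding e1 e2 by (simp add: right_diff_distrib)
  qed simp
  also have "\<dots> = TT {1..Nf} (zipf Nf \<beta>) (lam * pi * \<tau>^2) L"
    unfolding TT_def by (simp add: sum_subtractf)
  finally show ?thesis .
qed

lemma tail_mono:
  assumes lam: "lam > 0" and r1: "0 < rc1" and r12: "rc1 < rc2"
    and o1: "opt_cache Nf \<beta> lam rc1 p1" and o2: "opt_cache Nf \<beta> lam rc2 p2"
    and tau: "0 \<le> \<tau>" "\<tau> \<le> rc1"
  shows "(\<Sum>i=1..Nf. zipf Nf \<beta> i * (exp (- lam * p1 i * pi * \<tau>^2) - exp (- lam * p1 i * pi * rc1^2)))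
       \<le> (\<Sum>i=1..Nf. zipf Nf \<beta> i * (exp (- lam * p2 i * pi * \<tau>^2) - exp (- lam * p2 i * pi * rc2^2)))"
proof -
  have r2: "rc2 > 0" using r1 r12 by simp
  obtain L1 where K1: "\<forall>i\<in>{1..Nf}. p1 i * (lam * pi * rc1^2) = uu (zipf Nf \<beta>) L1 i"
    and S1: "SS {1..Nf} (zipf Nf \<beta>) L1 = lam * pi * rc1^2" using kkt[OF lam r1 o1] by blast
  obtain L2 where K2: "\<forall>i\<in>{1..Nf}. p2 i * (lam * pi * rc2^2) = uu (zipf Nf \<beta>) L2 i"
    and S2: "SS {1..Nf} (zipf Nf \<beta>) L2 = lam * pi * rc2^2" using kkt[OF lam r2 o2] by blast
  have sq: "rc1^2 < rc2^2" using r1 r12 by (simp add: power_strict_mono)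
  hence xx: "lam * pi * rc1^2 < lam * pi * rc2^2" using lam by simp
  have L: "L2 \<le> L1"
  proof (rule ccontr)
    assume "\<not> L2 \<le> L1"
    hence "SS {1..Nf} (zipf Nf \<beta>) L2 \<le> SS {1..Nf} (zipf Nf \<beta>) L1" by (intro SS_anti) auto
    thus False using S1 S2 xx by simp
  qed
  have t2: "\<tau>^2 \<le> rc1^2" using tau by (simp add: power_mono)
  have "TT {1..Nf} (zipf Nf \<beta>) (lam * pi * \<tau>^2) L1 \<le> TT {1..Nf} (zipf Nf \<beta>) (lam * pi * \<tau>^2) L2"
  proof (rule TT_mono[OF _ _ L])
    show "SS {1..Nf} (zipf Nf \<beta>) L1 > 0" using S1 lam r1 by simp
    show "lam * pi * \<tau>^2 \<le> SS {1..Nf} (zipf Nf \<beta>) L1" using S1 lam t2 by simp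
  qed (use lam zipf_pos in auto)
  thus ?thesis using tail_eq[OF lam r1 K1 S1, of \<tau>] tail_eq[OF lam r2 K2 S2, of \<tau>] by simp
qed



lemma up_integral:
  fixes g :: "real \<Rightarrow> real"
  assumes g: "continuous_on {0..b} g" and t: "0 \<le> \<tau>" "\<tau> \<le> b"
    and P: "\<And>r. r \<in> {0..b} \<Longrightarrow> (\<tau> < r \<longrightarrow> P r) \<and> (r < \<tau> \<longrightarrow> \<not> P r)"
  shows "(\<lambda>r. if P r then g r else 0) integrable_on {0..b}"
    and "integral {0..b} (\<lambda>r. if P r then g r else 0) = integral {\<tau>..b} g"
proof -
  have sp: "(\<lambda>r. if r \<in> {\<tau>..b} then g r else 0) x = (\<lambda>r. if P r then g r else 0) x"
    if "x \<in> {0..b} - {\<tau>}" for x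
    using P[of x] that by auto
  have int: "g integrable_on ({\<tau>..b} \<inter> {0..b})"
  proof -
    have "{\<tau>..b} \<inter> {0..b} = {\<tau>..b}" using t by auto
    moreover have "continuous_on {\<tau>..b} g" by (rule continuous_on_subset[OF g]) (use t in auto)
    ultimately show ?thesis using integrable_continuous_interval by metis
  qed
  hence int2: "(\<lambda>r. if r \<in> {\<tau>..b} then g r else 0) integrable_on {0..b}"
    using integrable_restrict_Int[where S="{\<tau>..b}" and T="{0..b}" and f=g] by blast
  show "(\<lambda>r. if P r then g r else 0) integrable_on {0..b}"
    by (rule integrable_spike[OF int2, of "{\<tau>}"]) (use sp in auto)
  have "integral {0..b} (\<lambda>r. if P r then g r else 0) = integral {0..b} (\<lambda>r. if r \<in> {\<tau>..b} then g r else 0)"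
    by (rule integral_spike[of "{\<tau>}"]) (use sp in auto)
  also have "\<dots> = integral ({\<tau>..b} \<inter> {0..b}) g" by (rule integral_restrict_Int)
  also have "{\<tau>..b} \<inter> {0..b} = {\<tau>..b}" using t by auto
  finally show "integral {0..b} (\<lambda>r. if P r then g r else 0) = integral {\<tau>..b} g" .
qed

lemma inf_props:
  fixes E :: "real \<Rightarrow> real"
  assumes mono: "mono_on {0..b2} E" and b: "b1 \<le> b2"
    and ne: "{r\<in>{0..b1}. y \<le> E r} \<noteq> {}"
  defines "\<tau> \<equiv> Inf {r\<in>{0..b1}. y \<le> E r}"
  shows "0 \<le> \<tau>" "\<tau> \<le> b1"
    "\<And>r. r \<in> {0..b2} \<Longrightarrow> (\<tau> < r \<longrightarrow> y \<le> E r) \<and> (r < \<tau> \<longrightarrow> \<not> y \<le> E r)"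
proof -
  let ?V = "{r\<in>{0..b1}. y \<le> E r}"
  have bdd: "bdd_below ?V" by (rule bdd_belowI[of _ 0]) auto
  obtain v where v: "v \<in> ?V" using ne by blast
  show "0 \<le> \<tau>" unfolding \<tau>_def by (rule cInf_greatest[OF ne]) auto
  have "\<tau> \<le> v" unfolding \<tau>_def by (rule cInf_lower[OF v bdd])
  thus "\<tau> \<le> b1" using v by auto
  fix r assume r: "r \<in> {0..b2}"
  show "(\<tau> < r \<longrightarrow> y \<le> E r) \<and> (r < \<tau> \<longrightarrow> \<not> y \<le> E r)"
  proof safe
    assume "\<tau> < r"
    then obtain w where w: "w \<in> ?V" "w < r" unfolding \<tau>_def using cInf_lessD[OF ne] by blast
    have "E w \<le> E r" using mono w r b unfolding mono_on_def by auto
    thus "y \<le> E r" using w by auto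
  next
    assume "r < \<tau>" "y \<le> E r"
    show False
    proof (cases "r \<le> b1")
      case True
      hence "r \<in> ?V" using r \<open>y \<le> E r\<close> by auto
      hence "\<tau> \<le> r" unfolding \<tau>_def by (rule cInf_lower[OF _ bdd])
      thus False using \<open>r < \<tau>\<close> by simp
    next
      case False thus False using \<open>r < \<tau>\<close> \<open>\<tau> \<le> b1\<close> by simp
    qed
  qed
qed

lemma up_integrable:
  fixes E g :: "real \<Rightarrow> real"
  assumes mono: "mono_on {0..b} E" and g: "continuous_on {0..b} g"
  shows "(\<lambda>r. if y \<le> E r then g r else 0) integrable_on {0..b}"
proof (cases "{r\<in>{0..b}. y \<le> E r} = {}")
  case True
  have "(\<lambda>r. 0::real) integrable_on {0..b}" by (rule integrable_0)
  thus ?thesis by (rule integrable_eq) (use True in auto)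
next
  case False
  note I = inf_props[OF mono order_refl False]
  show ?thesis by (rule up_integral(1)[OF g I(1,2)]) (use I(3) in blast)
qed

lemma up_le:
  fixes E g1 g2 :: "real \<Rightarrow> real"
  assumes b: "0 \<le> b1" "b1 \<le> b2" and mono: "mono_on {0..b2} E"
    and g1: "continuous_on {0..b1} g1" and g2: "continuous_on {0..b2} g2"
    and g2n: "\<And>r. r \<in> {0..b2} \<Longrightarrow> 0 \<le> g2 r"
    and tail: "\<And>\<tau>. \<tau> \<in> {0..b1} \<Longrightarrow> integral {\<tau>..b1} g1 \<le> integral {\<tau>..b2} g2"
  shows "integral {0..b1} (\<lambda>r. if y \<le> E r then g1 r else 0) \<le> integral {0..b2} (\<lambda>r. if y \<le> E r then g2 r else 0)"
proof (cases "{r\<in>{0..b1}. y \<le> E r} = {}")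
  case True
  have "integral {0..b1} (\<lambda>r. if y \<le> E r then g1 r else 0) = integral {0..b1} (\<lambda>r. 0)"
    by (rule integral_cong) (use True in auto)
  also have "\<dots> = 0" by simp
  also have "0 \<le> integral {0..b2} (\<lambda>r. if y \<le> E r then g2 r else 0)"
    by (rule integral_nonneg[OF up_integrable[OF mono g2]]) (use g2n in auto)
  finally show ?thesis .
next
  case False
  note I = inf_props[OF mono b(2) False]
  define \<tau> where "\<tau> = Inf {r\<in>{0..b1}. y \<le> E r}"
  have "integral {0..b1} (\<lambda>r. if y \<le> E r then g1 r else 0) = integral {\<tau>..b1} g1"
    unfolding \<tau>_def by (rule up_integral(2)[OF g1 I(1,2)]) (use I(3) b in auto)
  also have "\<dots> \<le> integral {\<tau>..b2} g2" using tail I(1,2) unfolding \<tau>_def by auto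
  also have "\<dots> = integral {0..b2} (\<lambda>r. if y \<le> E r then g2 r else 0)"
    unfolding \<tau>_def by (rule up_integral(2)[OF g2 I(1), symmetric]) (use I(2,3) b in auto)
  finally show ?thesis .
qed

lemma step_bounds:
  fixes \<delta> e :: real and N :: nat
  assumes d: "\<delta> > 0" and e: "0 \<le> e" "e \<le> real N * \<delta>"
  shows "(\<Sum>k\<in>{1..N}. \<delta> * (if real k * \<delta> \<le> e then 1 else 0)) \<le> e"
    and "e \<le> \<delta> + (\<Sum>k\<in>{1..N}. \<delta> * (if real k * \<delta> \<le> e then 1 else 0))"
proof -
  define m where "m = nat \<lfloor>e / \<delta>\<rfloor>"
  have q: "0 \<le> e / \<delta>" using d e by simp
  have m1: "real m \<le> e / \<delta>" unfolding m_def using q by linarith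
  have m2: "e / \<delta> < real m + 1" unfolding m_def using q by linarith
  have iff: "real k * \<delta> \<le> e \<longleftrightarrow> k \<le> m" for k
  proof -
    have "real k * \<delta> \<le> e \<longleftrightarrow> real k \<le> e / \<delta>" using d by (simp add: field_simps)
    also have "\<dots> \<longleftrightarrow> k \<le> m"
    proof
      assume "real k \<le> e / \<delta>"
      hence "real k < real m + 1" using m2 by linarith
      hence "real k < real (Suc m)" by simp
      thus "k \<le> m" by (simp only: of_nat_less_iff)
    next
      assume "k \<le> m"
      hence "real k \<le> real m" by simp
      thus "real k \<le> e / \<delta>" using m1 by linarith
    qed
    finally show ?thesis .
  qed
  have "e / \<delta> \<le> real N" using e d by (simp add: divide_le_eq)
  hence "real m \<le> real N" using m1 by linarith
  hence mN: "m \<le> N" by simp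
  have SE: "{k\<in>{1..N}. real k * \<delta> \<le> e} = {1..m}"
  proof (rule set_eqI)
    fix k show "k \<in> {k\<in>{1..N}. real k * \<delta> \<le> e} \<longleftrightarrow> k \<in> {1..m}"
      using iff[of k] mN by (simp only: mem_Collect_eq atLeastAtMost_iff) linarith
  qed
  have "(\<Sum>k\<in>{1..N}. \<delta> * (if real k * \<delta> \<le> e then 1 else 0)) = (\<Sum>k\<in>{1..N}. (if real k * \<delta> \<le> e then \<delta> else 0))"
    by (rule sum.cong) auto
  also have "\<dots> = (\<Sum>k\<in>{k\<in>{1..N}. real k * \<delta> \<le> e}. \<delta>)" by (rule sum.inter_filter[symmetric]) simp
  also have "\<dots> = \<delta> * real m" unfolding SE by simp
  finally have S: "(\<Sum>k\<in>{1..N}. \<delta> * (if real k * \<delta> \<le> e then 1 else 0)) = \<delta> * real m" .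
  show "(\<Sum>k\<in>{1..N}. \<delta> * (if real k * \<delta> \<le> e then 1 else 0)) \<le> e"
  proof -
    have "real m * \<delta> \<le> e" using m1 d by (simp add: le_divide_eq)
    thus ?thesis unfolding S by (simp add: mult.commute)
  qed
  show "e \<le> \<delta> + (\<Sum>k\<in>{1..N}. \<delta> * (if real k * \<delta> \<le> e then 1 else 0))"
  proof -
    have "e < (real m + 1) * \<delta>" using m2 d by (simp add: divide_less_eq)
    thus ?thesis unfolding S by (simp add: algebra_simps)
  qed
qed

lemma Eg_integrable:
  fixes E g :: "real \<Rightarrow> real"
  assumes mon: "mono_on {0..b} E" and g: "continuous_on {0..b} g"
  shows "(\<lambda>r. E r * g r) integrable_on {0..b}"
proof -
  have "space lborel = space lebesgue" "sets borel \<subseteq> sets lebesgue"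
    by force+
  then have fborel: "E \<in> borel_measurable (lebesgue_on {0..b})"
    by (metis mon borel_measurable_mono_on_fnc borel_measurable_subalgebra mono_restrict_space space_lborel space_restrict_space)
  have bnd: "bounded (E ` {0..b})"
  proof (cases "0 \<le> b")
    case True
    have "E ` {0..b} \<subseteq> {E 0..E b}" using mon True by (auto simp: mono_on_def)
    thus ?thesis using bounded_closed_interval bounded_subset by blast
  next
    case False thus ?thesis by simp
  qed
  have "(\<lambda>r. E r * g r) absolutely_integrable_on {0..b}"
    by (rule absolutely_integrable_bounded_measurable_product_real[OF fborel _ bnd absolutely_integrable_continuous_real[OF g]]) simp
  thus ?thesis using absolutely_integrable_on_def by blast
qed

lemma comparison:
  fixes E g1 g2 :: "real \<Rightarrow> real"
  assumes b: "0 \<le> b1" "b1 \<le> b2" and mono: "mono_on {0..b2} E"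
    and En: "\<And>r. r \<in> {0..b2} \<Longrightarrow> 0 \<le> E r"
    and g1: "continuous_on {0..b1} g1" and g2: "continuous_on {0..b2} g2"
    and g1n: "\<And>r. r \<in> {0..b1} \<Longrightarrow> 0 \<le> g1 r"
    and g2n: "\<And>r. r \<in> {0..b2} \<Longrightarrow> 0 \<le> g2 r"
    and tail: "\<And>\<tau>. \<tau> \<in> {0..b1} \<Longrightarrow> integral {\<tau>..b1} g1 \<le> integral {\<tau>..b2} g2"
  shows "integral {0..b1} (\<lambda>r. E r * g1 r) \<le> integral {0..b2} (\<lambda>r. E r * g2 r)"
proof -
  have mono1: "mono_on {0..b1} E" using mono b by (auto simp: mono_on_def)
  define M where "M = E b2"
  have EM: "E r \<le> M" if "r \<in> {0..b2}" for r using mono that b unfolding M_def mono_on_def by auto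
  define C where "C = integral {0..b1} g1"
  have C: "0 \<le> C" unfolding C_def using g1n by (intro integral_nonneg integrable_continuous_interval g1) auto
  have key: "integral {0..b1} (\<lambda>r. E r * g1 r) \<le> integral {0..b2} (\<lambda>r. E r * g2 r) + \<delta> * C"
    if d: "\<delta> > 0" for \<delta>
  proof -
    define N where "N = nat \<lceil>M / \<delta>\<rceil>"
    have MN: "M \<le> real N * \<delta>"
    proof -
      have "M / \<delta> \<le> real N" unfolding N_def by linarith
      thus ?thesis using d by (simp add: divide_le_eq)
    qed
    define h1 where "h1 k r = \<delta> * (if real k * \<delta> \<le> E r then g1 r else 0)" for k r
    define h2 where "h2 k r = \<delta> * (if real k * \<delta> \<le> E r then g2 r else 0)" for k r
    have i1: "h1 k integrable_on {0..b1}" for k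
      unfolding h1_def using integrable_on_cmult_left[OF up_integrable[OF mono1 g1, of "real k * \<delta>"], of \<delta>] by simp
    have i2: "h2 k integrable_on {0..b2}" for k
      unfolding h2_def using integrable_on_cmult_left[OF up_integrable[OF mono g2, of "real k * \<delta>"], of \<delta>] by simp
    have ig1: "g1 integrable_on {0..b1}" using g1 by (rule integrable_continuous_interval)
    have ig1d: "(\<lambda>r. \<delta> * g1 r) integrable_on {0..b1}" using integrable_on_cmult_left[OF ig1, of \<delta>] by simp
    have "integral {0..b1} (\<lambda>r. E r * g1 r) \<le> integral {0..b1} (\<lambda>r. \<delta> * g1 r + (\<Sum>k\<in>{1..N}. h1 k r))"
    proof (rule integral_le)
      show "(\<lambda>r. E r * g1 r) integrable_on {0..b1}" by (rule Eg_integrable[OF mono1 g1])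
      show "(\<lambda>r. \<delta> * g1 r + (\<Sum>k\<in>{1..N}. h1 k r)) integrable_on {0..b1}"
        by (intro integrable_add integrable_sum i1 ig1d) simp
      fix r assume r: "r \<in> {0..b1}"
      hence r2: "r \<in> {0..b2}" using b by auto
      have "E r \<le> \<delta> + (\<Sum>k\<in>{1..N}. \<delta> * (if real k * \<delta> \<le> E r then 1 else 0))"
        using step_bounds(2)[OF d En[OF r2], of N] EM[OF r2] MN by linarith
      hence "E r * g1 r \<le> (\<delta> + (\<Sum>k\<in>{1..N}. \<delta> * (if real k * \<delta> \<le> E r then 1 else 0))) * g1 r"
        using g1n[OF r] by (rule mult_right_mono)
      also have "\<dots> = \<delta> * g1 r + (\<Sum>k\<in>{1..N}. h1 k r)"
        unfolding h1_def distrib_right sum_distrib_right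
        by (intro arg_cong[where f="(+) (\<delta> * g1 r)"] sum.cong) auto
      finally show "E r * g1 r \<le> \<delta> * g1 r + (\<Sum>k\<in>{1..N}. h1 k r)" .
    qed
    also have "\<dots> = \<delta> * C + (\<Sum>k\<in>{1..N}. integral {0..b1} (h1 k))"
      unfolding C_def
      by (subst integral_add) (auto intro!: integrable_sum i1 ig1d simp: integral_sum i1)
    also have "(\<Sum>k\<in>{1..N}. integral {0..b1} (h1 k)) \<le> (\<Sum>k\<in>{1..N}. integral {0..b2} (h2 k))"
    proof (rule sum_mono)
      fix k
      have "integral {0..b1} (\<lambda>r. if real k * \<delta> \<le> E r then g1 r else 0) \<le> integral {0..b2} (\<lambda>r. if real k * \<delta> \<le> E r then g2 r else 0)"
        by (rule up_le[OF b mono g1 g2 g2n tail])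
      thus "integral {0..b1} (h1 k) \<le> integral {0..b2} (h2 k)" unfolding h1_def h2_def using d by simp
    qed
    also have "(\<Sum>k\<in>{1..N}. integral {0..b2} (h2 k)) = integral {0..b2} (\<lambda>r. \<Sum>k\<in>{1..N}. h2 k r)"
      by (rule integral_sum[symmetric]) (auto intro: i2)
    also have "\<dots> \<le> integral {0..b2} (\<lambda>r. E r * g2 r)"
    proof (rule integral_le)
      show "(\<lambda>r. E r * g2 r) integrable_on {0..b2}" by (rule Eg_integrable[OF mono g2])
      show "(\<lambda>r. \<Sum>k\<in>{1..N}. h2 k r) integrable_on {0..b2}" by (intro integrable_sum i2) simp
      fix r assume r: "r \<in> {0..b2}"
      have "(\<Sum>k\<in>{1..N}. \<delta> * (if real k * \<delta> \<le> E r then 1 else 0)) \<le> E r"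
        using step_bounds(1)[OF d En[OF r], of N] EM[OF r] MN by linarith
      hence "(\<Sum>k\<in>{1..N}. \<delta> * (if real k * \<delta> \<le> E r then 1 else 0)) * g2 r \<le> E r * g2 r"
        using g2n[OF r] by (rule mult_right_mono)
      moreover have "(\<Sum>k\<in>{1..N}. \<delta> * (if real k * \<delta> \<le> E r then 1 else 0)) * g2 r = (\<Sum>k\<in>{1..N}. h2 k r)"
        unfolding h2_def sum_distrib_right by (intro sum.cong) auto
      ultimately show "(\<Sum>k\<in>{1..N}. h2 k r) \<le> E r * g2 r" by simp
    qed
    finally show ?thesis by simp
  qed
  show ?thesis
  proof (rule field_le_epsilon)
    fix e :: real assume e: "e > 0"
    have "integral {0..b1} (\<lambda>r. E r * g1 r) \<le> integral {0..b2} (\<lambda>r. E r * g2 r) + (e / (C + 1)) * C"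
      using e C by (intro key) simp
    also have "(e / (C + 1)) * C \<le> e" using e C by (simp add: field_simps)
    finally show "integral {0..b1} (\<lambda>r. E r * g1 r) \<le> integral {0..b2} (\<lambda>r. E r * g2 r) + e" by simp
  qed
qed



lemma energy_r0: "energy F W sigma2 \<eta> Pc \<alpha> 0 Pt = 0"
  unfolding energy_def by simp

lemma energy_pos:
  assumes "F > 0" "W > 0" "sigma2 > 0" "\<eta> > 0" "Pc > 0" "r > 0" "Pt > 0"
  shows "energy F W sigma2 \<eta> Pc \<alpha> r Pt > 0"
proof -
  have "Pt * r powr (-\<alpha>) / sigma2 > 0" using assms by simp
  hence "log 2 (1 + Pt * r powr (-\<alpha>) / sigma2) > 0" by simp
  moreover have "Pt / \<eta> + Pc > 0" using assms by (simp add: add_pos_pos)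
  ultimately show ?thesis using assms unfolding energy_def by (intro mult_pos_pos divide_pos_pos) auto
qed

lemma energy_mono:
  assumes "F > 0" "W > 0" "sigma2 > 0" "\<eta> > 0" "Pc > 0" "\<alpha> > 0" "0 < r1" "r1 \<le> r2" "Pt > 0"
  shows "energy F W sigma2 \<eta> Pc \<alpha> r1 Pt \<le> energy F W sigma2 \<eta> Pc \<alpha> r2 Pt"
proof -
  have p: "r2 powr (-\<alpha>) \<le> r1 powr (-\<alpha>)" using assms by (intro powr_mono2') auto
  define l1 where "l1 = log 2 (1 + Pt * r1 powr (-\<alpha>) / sigma2)"
  define l2 where "l2 = log 2 (1 + Pt * r2 powr (-\<alpha>) / sigma2)"
  have q2: "Pt * r2 powr (-\<alpha>) / sigma2 > 0" using assms by simp
  hence l2: "l2 > 0" unfolding l2_def by simp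
  have "Pt * r2 powr (-\<alpha>) / sigma2 \<le> Pt * r1 powr (-\<alpha>) / sigma2"
    using p assms by (intro divide_right_mono mult_left_mono) auto
  hence l12: "l2 \<le> l1" unfolding l1_def l2_def using q2 by simp
  have "F / (W * l1) \<le> F / (W * l2)"
    using assms l2 l12 by (intro divide_left_mono mult_left_mono mult_pos_pos) auto
  thus ?thesis unfolding energy_def l1_def[symmetric] l2_def[symmetric]
    using assms by (intro mult_right_mono) auto
qed

lemma min_energy_props:
  assumes pos: "F > 0" "W > 0" "sigma2 > 0" "\<eta> > 0" "Pc > 0" "Pmax > 0" "\<alpha> > 0"
  shows "min_energy F W sigma2 \<eta> Pc Pmax \<alpha> 0 = 0"
    and "\<And>r. r \<ge> 0 \<Longrightarrow> min_energy F W sigma2 \<eta> Pc Pmax \<alpha> r \<ge> 0"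
    and "mono_on {0..} (min_energy F W sigma2 \<eta> Pc Pmax \<alpha>)"
proof -
  let ?e = "energy F W sigma2 \<eta> Pc \<alpha>"
  let ?E = "min_energy F W sigma2 \<eta> Pc Pmax \<alpha>"
  have ne: "{0<..Pmax} \<noteq> {}" using pos by auto
  show E0: "?E 0 = 0"
  proof -
    have "(\<lambda>Pt. ?e 0 Pt) ` {0<..Pmax} = {0}" using ne by (simp add: energy_r0 image_constant_conv)
    thus ?thesis unfolding min_energy_def by simp
  qed
  have Epos: "?E r \<ge> 0" if "r > 0" for r
    unfolding min_energy_def using ne
    by (intro cInf_greatest) (auto intro!: less_imp_le energy_pos[OF pos(1-5) that])
  show "?E r \<ge> 0" if "r \<ge> 0" for r
    using Epos[of r] E0 that by (cases "r = 0") auto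
  show "mono_on {0..} ?E"
  proof (rule mono_onI)
    fix r s :: real assume rs: "r \<in> {0..}" "s \<in> {0..}" "r \<le> s"
    show "?E r \<le> ?E s"
    proof (cases "r = 0")
      case True thus ?thesis using E0 Epos[of s] rs by (cases "s = 0") auto
    next
      case False
      hence r0: "r > 0" using rs by auto
      show ?thesis unfolding min_energy_def
      proof (rule cInf_mono)
        show "(\<lambda>Pt. ?e s Pt) ` {0<..Pmax} \<noteq> {}" using ne by simp
        show "bdd_below ((\<lambda>Pt. ?e r Pt) ` {0<..Pmax})"
          by (rule bdd_belowI[of _ 0]) (auto intro!: less_imp_le energy_pos[OF pos(1-5) r0])
        fix b assume "b \<in> (\<lambda>Pt. ?e s Pt) ` {0<..Pmax}"
        then obtain Pt where Pt: "Pt \<in> {0<..Pmax}" "b = ?e s Pt" by blast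
        show "\<exists>a\<in>(\<lambda>Pt. ?e r Pt) ` {0<..Pmax}. a \<le> b"
          using Pt energy_mono[OF pos(1-5) pos(7) r0 rs(3), of Pt] by auto
      qed
    qed
  qed
qed

lemma dd_integral:
  assumes "\<tau> \<le> b"
  shows "((\<lambda>r. dist_density lam q r) has_integral (exp (- lam * q * pi * \<tau>^2) - exp (- lam * q * pi * b^2))) {\<tau>..b}"
proof -
  have "((\<lambda>r. dist_density lam q r) has_integral ((\<lambda>r. - exp (- lam * q * pi * r^2)) b - (\<lambda>r. - exp (- lam * q * pi * r^2)) \<tau>)) {\<tau>..b}"
  proof (rule fundamental_theorem_of_calculus[OF assms])
    fix x assume "x \<in> {\<tau>..b}"
    have "((\<lambda>r. - exp (- lam * q * pi * r^2)) has_real_derivative dist_density lam q x) (at x)"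
      unfolding dist_density_def by (auto intro!: derivative_eq_intros simp: algebra_simps)
    thus "((\<lambda>r. - exp (- lam * q * pi * r^2)) has_vector_derivative dist_density lam q x) (at x within {\<tau>..b})"
      by (simp add: has_real_derivative_iff_has_vector_derivative has_vector_derivative_at_within)
  qed
  thus ?thesis by simp
qed



definition gg :: "nat \<Rightarrow> real \<Rightarrow> real \<Rightarrow> (nat \<Rightarrow> real) \<Rightarrow> real \<Rightarrow> real" where
  "gg Nf \<beta> lam p r = (\<Sum>i=1..Nf. zipf Nf \<beta> i * dist_density lam (p i) r)"

lemma dd_cont: "continuous_on S (dist_density lam q)"
  unfolding dist_density_def by (intro continuous_intros)

lemma gg_cont: "continuous_on S (gg Nf \<beta> lam p)"
  unfolding gg_def dist_density_def by (intro continuous_intros)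

lemma gg_nonneg:
  assumes "lam > 0" "r \<ge> 0" "\<And>i. i \<in> {1..Nf} \<Longrightarrow> p i \<ge> 0"
  shows "gg Nf \<beta> lam p r \<ge> 0"
  unfolding gg_def dist_density_def using assms zipf_pos
  by (intro sum_nonneg mult_nonneg_nonneg) (auto intro: less_imp_le)

lemma gg_tail:
  assumes "\<tau> \<le> b"
  shows "integral {\<tau>..b} (gg Nf \<beta> lam p) =
    (\<Sum>i=1..Nf. zipf Nf \<beta> i * (exp (- lam * p i * pi * \<tau>^2) - exp (- lam * p i * pi * b^2)))"
proof -
  have "(gg Nf \<beta> lam p has_integral
    (\<Sum>i=1..Nf. zipf Nf \<beta> i * (exp (- lam * p i * pi * \<tau>^2) - exp (- lam * p i * pi * b^2)))) {\<tau>..b}"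
    unfolding gg_def
    by (intro has_integral_sum has_integral_mult_right dd_integral assms) simp
  thus ?thesis by (rule integral_unique)
qed

lemma avg_eq:
  assumes mon: "mono_on {0..rc} E" and EE: "E = min_energy F W sigma2 \<eta> Pc Pmax \<alpha>"
  shows "avg_energy Nf \<beta> lam F W sigma2 \<eta> Pc Pmax \<alpha> p rc = integral {0..rc} (\<lambda>r. E r * gg Nf \<beta> lam p r)"
proof -
  have int: "(\<lambda>r. zipf Nf \<beta> i * (E r * dist_density lam (p i) r)) integrable_on {0..rc}" for i
    using integrable_on_cmult_left[OF Eg_integrable[OF mon dd_cont], of "zipf Nf \<beta> i"] by simp
  have "integral {0..rc} (\<lambda>r. E r * gg Nf \<beta> lam p r)
      = integral {0..rc} (\<lambda>r. \<Sum>i=1..Nf. zipf Nf \<beta> i * (E r * dist_density lam (p i) r))"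
    unfolding gg_def by (rule integral_cong) (simp add: sum_distrib_left algebra_simps)
  also have "\<dots> = (\<Sum>i=1..Nf. integral {0..rc} (\<lambda>r. zipf Nf \<beta> i * (E r * dist_density lam (p i) r)))"
    by (rule integral_sum) (auto intro: int)
  also have "\<dots> = avg_energy Nf \<beta> lam F W sigma2 \<eta> Pc Pmax \<alpha> p rc"
    unfolding avg_energy_def EE by simp
  finally show ?thesis by simp
qed

theorem proposition3:
  fixes Nf :: nat and \<beta> lam F W sigma2 \<eta> Pc Pmax \<alpha> :: real
    and pcs :: "real \<Rightarrow> nat \<Rightarrow> real"
  assumes "Nf \<ge> 1" and "\<beta> > 0" and "lam > 0"
    and "F > 0" and "W > 0" and "sigma2 > 0" and "\<eta> > 0" and "Pc > 0" and "Pmax > 0" and "\<alpha> > 0"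
    and opt: "\<And>rc. rc > 0 \<Longrightarrow> opt_cache Nf \<beta> lam rc (pcs rc)"
  shows "mono_on {0<..} (\<lambda>rc. offload Nf \<beta> lam (pcs rc) rc)
       \<and> mono_on {0<..} (\<lambda>rc. avg_energy Nf \<beta> lam F W sigma2 \<eta> Pc Pmax \<alpha> (pcs rc) rc)"
proof
  note lam = \<open>lam > 0\<close>
  have nonneg: "pcs rc i \<ge> 0" if "rc > 0" "i \<in> {1..Nf}" for rc i
    using opt[OF that(1)] that(2) by (auto simp: opt_cache_def feasible_cache_def)
  show "mono_on {0<..} (\<lambda>rc. offload Nf \<beta> lam (pcs rc) rc)"
  proof (rule mono_onI)
    fix r s :: real assume rs: "r \<in> {0<..}" "s \<in> {0<..}" "r \<le> s"
    have "offload Nf \<beta> lam (pcs r) r \<le> offload Nf \<beta> lam (pcs r) s"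
      unfolding offload_alt
    proof (rule sum_mono)
      fix i assume i: "i \<in> {1..Nf}"
      have "r^2 \<le> s^2" using rs by (simp add: power_mono)
      hence "lam * pi * r^2 \<le> lam * pi * s^2" using lam by simp
      hence "pcs r i * (lam * pi * r^2) \<le> pcs r i * (lam * pi * s^2)"
        using nonneg[of r i] rs i by (auto intro: mult_left_mono)
      hence "1 - exp (- (pcs r i * (lam * pi * r^2))) \<le> 1 - exp (- (pcs r i * (lam * pi * s^2)))" by simp
      thus "zipf Nf \<beta> i * (1 - exp (- (pcs r i * (lam * pi * r^2)))) \<le> zipf Nf \<beta> i * (1 - exp (- (pcs r i * (lam * pi * s^2))))"
        using zipf_pos[OF i, of \<beta>] by (intro mult_left_mono) auto
    qed
    also have "\<dots> \<le> offload Nf \<beta> lam (pcs s) s"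
      using opt[of s] opt[of r] rs by (auto simp: opt_cache_def)
    finally show "offload Nf \<beta> lam (pcs r) r \<le> offload Nf \<beta> lam (pcs s) s" .
  qed
  show "mono_on {0<..} (\<lambda>rc. avg_energy Nf \<beta> lam F W sigma2 \<eta> Pc Pmax \<alpha> (pcs rc) rc)"
  proof (rule mono_onI)
    fix r s :: real assume rs: "r \<in> {0<..}" "s \<in> {0<..}" "r \<le> s"
    let ?E = "min_energy F W sigma2 \<eta> Pc Pmax \<alpha>"
    note EP = min_energy_props[OF \<open>F > 0\<close> \<open>W > 0\<close> \<open>sigma2 > 0\<close> \<open>\<eta> > 0\<close> \<open>Pc > 0\<close> \<open>Pmax > 0\<close> \<open>\<alpha> > 0\<close>]
    have monb: "mono_on {0..b} ?E" for b by (rule mono_on_subset[OF EP(3)]) auto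
    show "avg_energy Nf \<beta> lam F W sigma2 \<eta> Pc Pmax \<alpha> (pcs r) r \<le> avg_energy Nf \<beta> lam F W sigma2 \<eta> Pc Pmax \<alpha> (pcs s) s"
    proof (cases "r = s")
      case True thus ?thesis by simp
    next
      case False
      hence rls: "r < s" using rs by simp
      have r0: "0 < r" "0 < s" using rs by auto
      have "integral {0..r} (\<lambda>x. ?E x * gg Nf \<beta> lam (pcs r) x) \<le> integral {0..s} (\<lambda>x. ?E x * gg Nf \<beta> lam (pcs s) x)"
      proof (rule comparison[OF _ _ monb])
        show "0 \<le> r" "r \<le> s" using rs by auto
        show "\<And>x. x \<in> {0..s} \<Longrightarrow> 0 \<le> ?E x" using EP(2) by auto
        show "continuous_on {0..r} (gg Nf \<beta> lam (pcs r))" "continuous_on {0..s} (gg Nf \<beta> lam (pcs s))"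
          by (rule gg_cont)+
        show "\<And>x. x \<in> {0..r} \<Longrightarrow> 0 \<le> gg Nf \<beta> lam (pcs r) x"
          using lam nonneg r0 by (intro gg_nonneg) auto
        show "\<And>x. x \<in> {0..s} \<Longrightarrow> 0 \<le> gg Nf \<beta> lam (pcs s) x"
          using lam nonneg r0 by (intro gg_nonneg) auto
        fix \<tau> assume t: "\<tau> \<in> {0..r}"
        show "integral {\<tau>..r} (gg Nf \<beta> lam (pcs r)) \<le> integral {\<tau>..s} (gg Nf \<beta> lam (pcs s))"
          using gg_tail[of \<tau> r Nf \<beta> lam "pcs r"] gg_tail[of \<tau> s Nf \<beta> lam "pcs s"]
            tail_mono[OF lam r0(1) rls opt[OF r0(1)] opt[OF r0(2)], of \<tau>] t rls by auto
      qed
      thus ?thesis using avg_eq[OF monb refl] by simp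
    qed
  qed
qed


end
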